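(* Let $N$ be an odd prime and let $M=(N-1)/2$. Then for every integer $r$ with $0<r\le M$, the inverse problem $\mathrm{IP}(N,r,1)$ is uniquely solvable; that is, for any two distinct vectors ${\tt x},{\tt y}\in\Omega(N,r)$ one has $\tilde{x}_1\neq\tilde{y}_1$.
   Context: For a vector ${\tt v}=(v_1,\dots,v_N)$ of odd length $N>1$, its discrete Fourier transform (DFT) coefficients are $\tilde{v}_m=\sum_{n=1}^N v_n e^{\mathrm{i}\xi m n}$ with $\xi=2\pi/N$, for integers $m$. A vector is binary if all its entries are $0$ or $1$. $\Omega(N,r)$ denotes the set of binary vectors of length $N$ containing exactly $r$ ones (popcount $r$), so $\tilde{x}_0=r$ for ${\tt x}\in\Omega(N,r)$. For $1\le L\le M=(N-1)/2$, two vectors ${\tt x},{\tt y}\in\Omega(N,r)$ are called $L$-distinguishable if $\tilde{x}_m\neq\tilde{y}_m$ for some $m\in\{1,\dots,L\}$, and $L$-indistinguishable otherwise. The inverse problem $\mathrm{IP}(N,r,L)$ (recovering ${\tt x}\in\Omega(N,r)$ from $\tilde{x}_1,\dots,\tilde{x}_L$) is called uniquely solvable if all pairs of distinct vectors in $\Omega(N,r)$ are $L$-distinguishable. *)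

theory Defs
  imports "HOL-Analysis.Analysis"
begin

text \<open>A vector v = (v_1,...,v_N) is represented as a list of length N, with v_n = v ! (n-1).\<close>

definition dft_coeff :: "real list \<Rightarrow> int \<Rightarrow> complex" where
  "dft_coeff v m = (\<Sum>n = 1..length v.
      complex_of_real (v ! (n - 1)) *
      exp (\<i> * complex_of_real (2 * pi / real (length v)) * of_int m * of_nat n))"

definition Omega :: "nat \<Rightarrow> nat \<Rightarrow> real list set" where
  "Omega N r = {x. length x = N \<and> set x \<subseteq> {0, 1} \<and> length (filter (\<lambda>a. a = 1) x) = r}"

definition L_distinguishable :: "nat \<Rightarrow> real list \<Rightarrow> real list \<Rightarrow> bool" where
  "L_distinguishable L x y = (\<exists>m::int. 1 \<le> m \<and> m \<le> int L \<and> dft_coeff x m \<noteq> dft_coeff y m)"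

definition IP_uniquely_solvable :: "nat \<Rightarrow> nat \<Rightarrow> nat \<Rightarrow> bool" where
  "IP_uniquely_solvable N r L =
     (\<forall>x\<in>Omega N r. \<forall>y\<in>Omega N r. x \<noteq> y \<longrightarrow> L_distinguishable L x y)"

end

theory Submission
  imports Defs "Berlekamp_Zassenhaus.Factor_Bound"
begin

lemma eis_aux:
  fixes f g F :: "int poly" and p :: int
  assumes pr: "prime p" and FF: "F = f * g"
    and dv: "\<forall>k<degree F. p dvd poly.coeff F k"
    and nl: "\<not> p dvd lead_coeff F"
    and f0: "p dvd poly.coeff f 0" and g0: "\<not> p dvd poly.coeff g 0"
  shows "degree g = 0"
proof (rule ccontr)
  assume dg: "degree g \<noteq> 0"
  have F0: "F \<noteq> 0" using nl by auto
  hence fg0: "f \<noteq> 0" "g \<noteq> 0" using FF by auto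
  have degF: "degree F = degree f + degree g" using FF fg0 by (simp add: degree_mult_eq)
  have "lead_coeff F = lead_coeff f * lead_coeff g" using FF by (simp add: lead_coeff_mult)
  hence nlf: "\<not> p dvd lead_coeff f" using nl by auto
  define k where "k = (LEAST k. \<not> p dvd poly.coeff f k)"
  have k1: "\<not> p dvd poly.coeff f k" unfolding k_def by (rule LeastI[of _ "degree f"]) (rule nlf)
  have k2: "k \<le> degree f" unfolding k_def by (rule Least_le) (rule nlf)
  have k3: "\<And>i. i < k \<Longrightarrow> p dvd poly.coeff f i" unfolding k_def using not_less_Least by blast
  have kpos: "k > 0" using k1 f0 by (cases k) auto
  have "k < degree F" using k2 dg degF by simp
  hence pk: "p dvd poly.coeff F k" using dv by auto
  have "poly.coeff F k = (\<Sum>i\<le>k. poly.coeff f i * poly.coeff g (k - i))"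
    using FF by (simp add: coeff_mult)
  also have "\<dots> = (\<Sum>i<k. poly.coeff f i * poly.coeff g (k - i)) + poly.coeff f k * poly.coeff g 0"
    by (simp add: lessThan_Suc_atMost[symmetric])
  finally have eq: "poly.coeff F k = (\<Sum>i<k. poly.coeff f i * poly.coeff g (k - i)) + poly.coeff f k * poly.coeff g 0" .
  have "p dvd (\<Sum>i<k. poly.coeff f i * poly.coeff g (k - i))"
    by (rule dvd_sum) (simp add: k3)
  hence "p dvd poly.coeff f k * poly.coeff g 0" using pk eq by (metis dvd_add_right_iff)
  thus False using pr k1 g0 by (simp add: prime_dvd_mult_iff)
qed

lemma eisenstein:
  fixes f g F :: "int poly" and p :: int
  assumes pr: "prime p" and FF: "F = f * g"
    and dv: "\<forall>k<degree F. p dvd poly.coeff F k"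
    and n2: "\<not> p^2 dvd poly.coeff F 0"
    and nl: "\<not> p dvd lead_coeff F"
  shows "degree f = 0 \<or> degree g = 0"
proof (cases "degree F = 0")
  case True
  have "F \<noteq> 0" using nl by auto
  then show ?thesis using True FF by (auto simp: degree_mult_eq)
next
  case False
  hence "p dvd poly.coeff F 0" using dv by auto
  moreover have c0: "poly.coeff F 0 = poly.coeff f 0 * poly.coeff g 0" using FF by (simp add: coeff_mult_0)
  ultimately have "p dvd poly.coeff f 0 \<or> p dvd poly.coeff g 0" using pr by (simp add: prime_dvd_mult_iff)
  moreover have "\<not> (p dvd poly.coeff f 0 \<and> p dvd poly.coeff g 0)"
    using n2 c0 by (metis mult_dvd_mono power2_eq_square)
  ultimately show ?thesis
    using eis_aux[OF pr FF dv nl] eis_aux[OF pr _ _ nl, of g f] FF dv by (auto simp: mult.commute)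
qed

definition cyc :: "nat \<Rightarrow> 'a::comm_ring_1 poly" where
  "cyc N = (\<Sum>k<N. Polynomial.monom 1 k)"

lemma coeff_cyc: "poly.coeff (cyc N) j = (if j < N then 1 else 0)"
  unfolding cyc_def by (simp add: coeff_sum coeff_monom)

lemma poly_cyc: "poly (cyc N) x = (\<Sum>k<N. x ^ k)"
  unfolding cyc_def by (simp add: poly_sum poly_monom)

lemma degree_cyc: "N \<ge> 1 \<Longrightarrow> (1::'a) \<noteq> 0 \<Longrightarrow> degree (cyc N :: 'a::{comm_ring_1} poly) = N - 1"
  by (rule antisym) (auto intro!: degree_le le_degree simp: coeff_cyc)

lemma map_poly_cyc:
  assumes "f 0 = 0" "f 1 = 1"
  shows "map_poly f (cyc N) = cyc N"
  by (rule poly_eqI) (simp add: coeff_map_poly assms coeff_cyc)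

lemma cyc_shift:
  "pCons 0 ((cyc N :: int poly) \<circ>\<^sub>p [:1,1:]) = [:1,1:] ^ N - 1"
proof -
  have "poly (pCons 0 ((cyc N :: int poly) \<circ>\<^sub>p [:1,1:])) x = poly ([:1,1:] ^ N - 1) x" for x :: int
  proof -
    have "1 - (1 + x) ^ N = (1 - (1 + x)) * (\<Sum>i<N. (1 + x) ^ i)" by (rule one_diff_power_eq)
    thus ?thesis by (simp add: poly_pcompose poly_cyc algebra_simps)
  qed
  thus ?thesis using poly_eq_poly_eq_iff by blast
qed

lemma coeff_cyc_shift:
  assumes "k < N"
  shows "poly.coeff ((cyc N :: int poly) \<circ>\<^sub>p [:1,1:]) k = int (N choose Suc k)"
proof -
  have "poly.coeff ((cyc N :: int poly) \<circ>\<^sub>p [:1,1:]) k = poly.coeff (pCons 0 ((cyc N :: int poly) \<circ>\<^sub>p [:1,1:])) (Suc k)"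
    by simp
  also have "\<dots> = poly.coeff ([:1,1:] ^ N) (Suc k) - poly.coeff 1 (Suc k)"
    unfolding cyc_shift by simp
  also have "\<dots> = int (N choose Suc k)"
    using assms coeff_linear_poly_power[of "Suc k" N "1::int" 1] by (simp add: coeff_1)
  finally show ?thesis .
qed

lemma cyc_irr:
  assumes pr: "prime N" and fac: "(cyc N :: int poly) = g * h"
  shows "degree g = 0 \<or> degree h = 0"
proof -
  let ?q = "[:1,1:] :: int poly"
  define F where "F = (cyc N :: int poly) \<circ>\<^sub>p ?q"
  have N1: "N > 1" using pr prime_gt_1_nat by blast
  have FF: "F = (g \<circ>\<^sub>p ?q) * (h \<circ>\<^sub>p ?q)" unfolding F_def fac by (simp add: pcompose_mult)
  have dF: "degree F = N - 1" unfolding F_def using N1 by (simp add: degree_pcompose degree_cyc)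
  have pr': "prime (int N)" using pr by simp
  have dv: "\<forall>k<degree F. int N dvd poly.coeff F k"
  proof (intro allI impI)
    fix k assume "k < degree F"
    hence k: "k < N - 1" using dF by simp
    have "N dvd N choose Suc k" using pr k by (intro dvd_choose_prime) auto
    moreover have "poly.coeff F k = int (N choose Suc k)" unfolding F_def using k by (intro coeff_cyc_shift) simp
    ultimately show "int N dvd poly.coeff F k" by simp
  qed
  have c0: "poly.coeff F 0 = int N" unfolding F_def using N1 coeff_cyc_shift[of 0 N] by simp
  have n2: "\<not> (int N)^2 dvd poly.coeff F 0"
  proof
    assume "(int N)^2 dvd poly.coeff F 0"
    hence "int N * int N dvd int N * 1" using c0 by (simp add: power2_eq_square)
    hence "int N dvd 1" using N1 by (subst (asm) dvd_mult_cancel_left) auto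
    thus False using N1 by simp
  qed
  have "lead_coeff F = 1" using dF N1 coeff_cyc_shift[of "N - 1" N] unfolding F_def by simp
  hence nl: "\<not> int N dvd lead_coeff F" using N1 by simp
  from eisenstein[OF pr' FF dv n2 nl] show ?thesis by (simp add: degree_pcompose)
qed

lemma map_of_rat_mult: "map_poly (of_rat :: rat \<Rightarrow> complex) (a * b) = map_poly of_rat a * map_poly of_rat b"
  by (rule poly_eqI) (simp add: coeff_map_poly coeff_mult of_rat_sum of_rat_mult)

lemma map_of_rat_add: "map_poly (of_rat :: rat \<Rightarrow> complex) (a + b) = map_poly of_rat a + map_poly of_rat b"
  by (rule poly_eqI) (simp add: coeff_map_poly of_rat_add)

lemma eval_hom:
  fixes z :: complex and a b c d :: "rat poly"
  shows "poly (map_poly of_rat (a * b + c * d)) z =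
     poly (map_poly of_rat a) z * poly (map_poly of_rat b) z + poly (map_poly of_rat c) z * poly (map_poly of_rat d) z"
proof -
  have m: "\<And>p q::rat poly. map_poly (of_rat::rat\<Rightarrow>complex) (p*q) = map_poly of_rat p * map_poly of_rat q"
    by (rule map_of_rat_mult)
  show ?thesis by (simp add: m map_of_rat_add poly_mult poly_add)
qed

lemma cyc_multiple:
  fixes P :: "rat poly" and z :: complex
  assumes pr: "prime N" and dP: "degree P < N"
    and zP: "poly (map_poly of_rat P) z = 0" and zc: "poly (cyc N) z = 0"
  shows "\<exists>c. P = Polynomial.smult c (cyc N)"
proof -
  let ?E = "\<lambda>p::rat poly. poly (map_poly of_rat p) z"
  let ?C = "cyc N :: rat poly"
  have N1: "N > 1" using pr prime_gt_1_nat by blast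
  have EC: "?E ?C = 0" using zc by (simp add: map_poly_cyc)
  have "poly.coeff ?C 0 = 1" using N1 by (simp add: coeff_cyc)
  hence C0: "?C \<noteq> 0" by auto
  define g where "g = gcd P ?C"
  have "fst (bezout_coefficients P ?C) * P + snd (bezout_coefficients P ?C) * ?C = g"
    unfolding g_def by (rule bezout_coefficients_fst_snd)
  hence Eg: "?E g = 0" using eval_hom[of "fst (bezout_coefficients P ?C)" P "snd (bezout_coefficients P ?C)" ?C z] zP EC
    by simp
  have g0: "g \<noteq> 0" unfolding g_def using C0 by simp
  have dg: "degree g > 0"
  proof (rule ccontr)
    assume "\<not> degree g > 0"
    hence gc: "g = [:poly.coeff g 0:]" by (simp add: degree_0_id)
    have "?E g = ?E [:poly.coeff g 0:]" by (subst gc) (rule refl)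
    hence "?E g = of_rat (poly.coeff g 0)" by (simp add: of_rat_hom.map_poly_pCons_hom)
    moreover have "poly.coeff g 0 \<noteq> 0" using g0 gc by (metis pCons_0_0)
    ultimately show False using Eg by simp
  qed
  have "g dvd ?C" unfolding g_def by simp
  then obtain h where Cgh: "?C = g * h" by (auto elim: dvdE)
  have "map_poly rat_of_int (cyc N) = g * h" using Cgh by (simp add: map_poly_cyc)
  from rat_to_int_factor[OF this] obtain g' h' where
    fac: "(cyc N :: int poly) = g' * h'" and dg': "degree g' = degree g" "degree h' = degree h" by blast
  have h0: "h \<noteq> 0" using Cgh C0 by auto
  have dh: "degree h = 0" using cyc_irr[OF pr fac] dg dg' by simp
  have "degree ?C = N - 1" using N1 by (intro degree_cyc) auto
  moreover have "degree ?C = degree g + degree h" using Cgh g0 h0 by (simp add: degree_mult_eq)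
  ultimately have dgN: "degree g = N - 1" using dh by simp
  have "h = [:poly.coeff h 0:]" using dh by (simp add: degree_0_id)
  then obtain b where hb: "h = [:b:]" by blast
  have b0: "b \<noteq> 0" using h0 hb by simp
  have gC: "g = Polynomial.smult (inverse b) ?C" using Cgh hb b0 by simp
  have "g dvd P" unfolding g_def by simp
  then obtain q where Pgq: "P = g * q" by (auto elim: dvdE)
  show ?thesis
  proof (cases "q = 0")
    case True
    then show ?thesis using Pgq by (intro exI[of _ 0]) simp
  next
    case False
    have "degree P = degree g + degree q" using Pgq g0 False by (simp add: degree_mult_eq)
    hence "degree q = 0" using dP dgN by simp
    hence "q = [:poly.coeff q 0:]" by (simp add: degree_0_id)
    then obtain a where "q = [:a:]" by blast
    hence "P = Polynomial.smult (a * inverse b) ?C" using Pgq gC by (simp add: mult.commute)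
    thus ?thesis by blast
  qed
qed

lemma count_ones:
  assumes "length x = N"
  shows "(\<Sum>k<N. (if x ! k = (1::real) then 1 else 0 :: int)) = int (length (filter (\<lambda>a. a = 1) x))"
proof -
  have "(\<Sum>k<N. (if x ! k = (1::real) then 1 else 0 :: int)) = (\<Sum>k\<in>{k\<in>{..<N}. x ! k = 1}. 1)"
    by (rule sum.inter_filter[symmetric]) simp
  also have "{k\<in>{..<N}. x ! k = 1} = {i. i < length x \<and> x ! i = 1}" using assms by auto
  finally show ?thesis by (simp add: length_filter_conv_card)
qed

theorem theorem1:
  fixes N r :: nat
  assumes "prime N" and "odd N"
    and "0 < r" and "r \<le> (N - 1) div 2"
  shows "IP_uniquely_solvable N r 1"
proof -
  have pr: "prime N" by fact
  have N1: "N > 1" using pr prime_gt_1_nat by blast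
  define z :: complex where "z = exp (2 * of_real pi * \<i> / of_nat N)"
  have zpow: "z ^ n = exp (of_nat n * (2 * of_real pi * \<i> / of_nat N))" for n
    unfolding z_def by (rule exp_of_nat_mult[symmetric])
  have zN: "z ^ N = 1" using N1 by (simp add: zpow exp_two_pi_i)
  have z1: "z \<noteq> 1"
    using complex_root_unity_eq_1[of N 1] N1 by (simp add: z_def)
  have z0: "z \<noteq> 0" by (simp add: z_def)
  have zc: "poly (cyc N) z = 0"
    using z1 zN by (simp add: poly_cyc sum_gp_strict)
  have dft: "dft_coeff v 1 = z * (\<Sum>k<N. of_real (v ! k) * z ^ k)" if lv: "length v = N" for v
  proof -
    have e: "exp (\<i> * complex_of_real (2 * pi / real N) * of_int 1 * of_nat n) = z ^ n" for n
      unfolding zpow by (rule arg_cong[where f=exp]) (simp add: field_simps)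
    have "dft_coeff v 1 = (\<Sum>n = 1..N. complex_of_real (v ! (n - 1)) * z ^ n)"
      using e by (simp add: dft_coeff_def lv)
    also have "\<dots> = (\<Sum>k<N. complex_of_real (v ! k) * z ^ Suc k)"
      by (simp add: sum.atLeast1_atMost_eq)
    also have "\<dots> = z * (\<Sum>k<N. of_real (v ! k) * z ^ k)"
      by (simp add: sum_distrib_left algebra_simps)
    finally show ?thesis .
  qed
  show ?thesis
    unfolding IP_uniquely_solvable_def L_distinguishable_def
  proof (intro ballI impI)
    fix x y assume xO: "x \<in> Omega N r" and yO: "y \<in> Omega N r" and xy: "x \<noteq> y"
    show "\<exists>m. 1 \<le> m \<and> m \<le> int 1 \<and> dft_coeff x m \<noteq> dft_coeff y m"
    proof (rule ccontr)
      assume "\<not> ?thesis"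
      hence eq: "dft_coeff x 1 = dft_coeff y 1" by auto
      have lx: "length x = N" and sx: "set x \<subseteq> {0,1}" and cx: "length (filter (\<lambda>a. a = 1) x) = r"
        using xO by (auto simp: Omega_def)
      have ly: "length y = N" and sy: "set y \<subseteq> {0,1}" and cy: "length (filter (\<lambda>a. a = 1) y) = r"
        using yO by (auto simp: Omega_def)
      define d where "d k = (if x ! k = 1 then 1 else 0) - (if y ! k = 1 then 1 else 0 :: int)" for k
      have xd: "x ! k - y ! k = real_of_int (d k)" if k: "k < N" for k
      proof -
        have "x ! k \<in> {0,1}" using sx k lx nth_mem by blast
        moreover have "y ! k \<in> {0,1}" using sy k ly nth_mem by blast
        ultimately show ?thesis unfolding d_def by auto
      qed
      define P where "P = (\<Sum>k<N. Polynomial.monom (rat_of_int (d k)) k)"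
      have cP: "poly.coeff P j = (if j < N then rat_of_int (d j) else 0)" for j
        unfolding P_def by (simp add: coeff_sum coeff_monom)
      have dP: "degree P < N"
      proof -
        have "degree P \<le> N - 1" by (rule degree_le) (auto simp: cP)
        thus ?thesis using N1 by simp
      qed
      have mP: "map_poly (of_rat :: rat \<Rightarrow> complex) P = (\<Sum>k<N. Polynomial.monom (of_int (d k)) k)"
        by (rule poly_eqI) (simp add: coeff_map_poly cP coeff_sum coeff_monom)
      have "z * (\<Sum>k<N. of_int (d k) * z ^ k) = dft_coeff x 1 - dft_coeff y 1"
      proof -
        have "dft_coeff x 1 - dft_coeff y 1 = z * (\<Sum>k<N. (of_real (x ! k) - of_real (y ! k)) * z ^ k)"
          by (simp add: dft[OF lx] dft[OF ly] sum_subtractf right_diff_distrib left_diff_distrib)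
        also have "\<dots> = z * (\<Sum>k<N. of_int (d k) * z ^ k)"
        proof -
          have "(of_real (x ! k) - of_real (y ! k)) = (of_int (d k) :: complex)" if "k < N" for k
            using xd[OF that] by (metis of_real_diff of_real_of_int_eq)
          thus ?thesis by simp
        qed
        finally show ?thesis by simp
      qed
      hence "poly (map_poly of_rat P) z = 0" using eq z0 by (simp add: mP poly_sum poly_monom mult.commute)
      from cyc_multiple[OF pr dP this zc] obtain c where Pc: "P = Polynomial.smult c (cyc N)" by blast
      have dc: "rat_of_int (d k) = c" if "k < N" for k
        using arg_cong[OF Pc, of "\<lambda>p. poly.coeff p k"] that by (simp add: cP coeff_cyc)
      have "(\<Sum>k<N. d k) = 0"
        unfolding d_def sum_subtractf using count_ones[OF lx] count_ones[OF ly] cx cy by simp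
      hence "(\<Sum>k<N. rat_of_int (d k)) = 0" by (metis of_int_0 of_int_sum)
      hence "of_nat N * c = 0" using dc by simp
      hence c0: "c = 0" using N1 by simp
      have "x = y"
      proof (rule nth_equalityI)
        show "length x = length y" using lx ly by simp
        fix k assume "k < length x"
        hence k: "k < N" using lx by simp
        have "d k = 0" using dc[OF k] c0 by simp
        thus "x ! k = y ! k" using xd[OF k] by simp
      qed
      thus False using xy by simp
    qed
  qed
qed

end
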